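(* Let $K=2$ and let $N\ge 0$ be an integer. Then there exists a pair $(n_1^\star,n_2^\star)$ of nonnegative integers with $n_1^\star+n_2^\star=N$ which minimizes $\mathbb{E}[u(n_1,n_2)]$ over all pairs of nonnegative integers $(n_1,n_2)$ with $n_1+n_2=N$, and which satisfies $|n_1^\star-n_2^\star|\le 1$.
   Context: Fix an integer $K\ge 2$. An initial assortment is a vector $\vec n=(n_1,\dots,n_K)$ of nonnegative integers ($n_i$ is the initial stock of goodie type $i$), with $N=\sum_i n_i$ attendees. Attendees arrive one at a time: the stocks start at $\vec n^{(0)}=\vec n$; at each step $t=1,2,\dots$, as long as at least two coordinates of the current stock vector $\vec n^{(t-1)}$ are nonzero, attendee $t$ chooses an index $i$ uniformly at random (independently of the past) among the indices with $n_i^{(t-1)}>0$, and $\vec n^{(t)}=\vec n^{(t-1)}-\vec e_i$, where $\vec e_i$ is the $i$-th standard unit vector. Let $T$ be the first time at which at most one coordinate of $\vec n^{(T)}$ is nonzero. The remaining attendees, who have only one type available, are called unhappy; their number is the random variable $u(\vec n)=N-T$. *)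

theory Defs
  imports "HOL-Probability.Probability"
begin

text \<open>Stock vector n = (n_1,...,n_K) represented as a list of length K.
  unhappy_pmf ns is the distribution of the number u(n) of unhappy attendees:
  if at most one coordinate is nonzero, all remaining attendees are unhappy;
  otherwise the next attendee picks uniformly among the available types.\<close>

definition avail :: "nat list \<Rightarrow> nat set" where
  "avail ns = {i. i < length ns \<and> ns ! i > 0}"

function unhappy_pmf :: "nat list \<Rightarrow> nat pmf" where
  "unhappy_pmf ns =
     (if card (avail ns) \<le> 1 then return_pmf (sum_list ns)
      else bind_pmf (pmf_of_set (avail ns))
             (\<lambda>i. unhappy_pmf (ns[i := ns ! i - 1])))"
  by pat_completeness auto
termination
proof (relation "Wellfounded.measure sum_list")
  show "wf (Wellfounded.measure sum_list)" by simp
next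
  fix ns i
  assume c: "\<not> card (avail ns) \<le> 1" and i: "i \<in> set_pmf (pmf_of_set (avail ns))"
  have fin: "finite (avail ns)" unfolding avail_def by simp
  have ne: "avail ns \<noteq> {}" using c by auto
  have "i \<in> avail ns" using i fin ne by simp
  hence il: "i < length ns" and ip: "ns ! i > 0" unfolding avail_def by auto
  have le: "ns ! i \<le> sum_list ns" using il by (simp add: elem_le_sum_list)
  have "sum_list (ns[i := ns ! i - 1]) = sum_list ns - ns ! i + (ns ! i - 1)"
    using il le by (simp add: sum_list_update)
  with le show "(ns[i := ns ! i - 1], ns) \<in> Wellfounded.measure sum_list" using ip by simp
qed

definition expected_unhappy :: "nat list \<Rightarrow> real" where
  "expected_unhappy ns = measure_pmf.expectation (unhappy_pmf ns) real"

end

theory Submission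
  imports Defs
begin

declare unhappy_pmf.simps[simp del]

lemma fin_unhappy: "finite (set_pmf (unhappy_pmf ns))"
proof (induction ns rule: unhappy_pmf.induct)
  case (1 ns)
  have fa: "finite (avail ns)" unfolding avail_def by simp
  show ?case
  proof (cases "card (avail ns) \<le> 1")
    case True
    then show ?thesis by (subst unhappy_pmf.simps) simp
  next
    case False
    hence ne: "avail ns \<noteq> {}" by auto
    have "\<forall>i\<in>avail ns. finite (set_pmf (unhappy_pmf (ns[i := ns ! i - 1])))"
      using 1 False fa ne by auto
    then show ?thesis using False fa ne by (subst unhappy_pmf.simps) (auto simp: set_bind_pmf)
  qed
qed

definition E :: "nat \<Rightarrow> nat \<Rightarrow> real" where "E a b = expected_unhappy [a, b]"

lemma E0: "a = 0 \<or> b = 0 \<Longrightarrow> E a b = real (a + b)"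
proof -
  assume h: "a = 0 \<or> b = 0"
  have av: "avail [a,b] = {i. (i = 0 \<and> a > 0) \<or> (i = 1 \<and> b > 0)}"
    unfolding avail_def by (auto simp: less_Suc_eq)
  have "avail [a,b] \<subseteq> {0} \<or> avail [a,b] \<subseteq> {1}" using h unfolding av by auto
  hence "card (avail [a,b]) \<le> 1"
    using card_mono[of "{0::nat}" "avail [a,b]"] card_mono[of "{1::nat}" "avail [a,b]"] by auto
  then show ?thesis unfolding E_def expected_unhappy_def by (subst unhappy_pmf.simps) simp
qed

lemma Erec: "a > 0 \<Longrightarrow> b > 0 \<Longrightarrow> E a b = (E (a - 1) b + E a (b - 1)) / 2"
proof -
  assume a: "a > 0" and b: "b > 0"
  have av: "avail [a,b] = {0,1}" using a b unfolding avail_def by auto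
  have "expected_unhappy [a,b] = measure_pmf.expectation (pmf_of_set {0::nat,1} \<bind>
          (\<lambda>i. unhappy_pmf ([a,b][i := [a,b] ! i - 1]))) real"
    unfolding expected_unhappy_def by (subst unhappy_pmf.simps) (simp add: av)
  also have "\<dots> = (\<Sum>i\<in>{0::nat,1}. measure_pmf.expectation (unhappy_pmf ([a,b][i := [a,b] ! i - 1])) real /\<^sub>R real (card {0::nat,1}))"
    by (rule pmf_expectation_bind_pmf_of_set) (auto simp: fin_unhappy)
  also have "\<dots> = (E (a - 1) b + E a (b - 1)) / 2"
    by (simp add: E_def numeral_2_eq_2 expected_unhappy_def field_simps)
  finally show ?thesis unfolding E_def .
qed

lemma Esym_bound: "E a b = E b a \<and> E a b \<le> real (a + b)"
proof (induction "a + b" arbitrary: a b rule: less_induct)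
  case less
  show ?case
  proof (cases "a = 0 \<or> b = 0")
    case True then show ?thesis using E0 by auto
  next
    case False
    hence a: "a > 0" and b: "b > 0" by auto
    have i1: "E (a-1) b = E b (a-1) \<and> E (a-1) b \<le> real (a - 1 + b)" using less(1)[of "a-1" b] a by simp
    have i2: "E a (b-1) = E (b-1) a \<and> E a (b-1) \<le> real (a + (b - 1))" using less(1)[of a "b-1"] b by simp
    have "real (a - 1 + b) = real (a + b) - 1" "real (a + (b - 1)) = real (a + b) - 1" using a b by auto
    then show ?thesis using Erec[OF a b] Erec[OF b a] i1 i2 by auto
  qed
qed

lemma Dpos: "b \<le> a \<Longrightarrow> E a (b + 1) \<le> E (a + 1) b"
proof (induction "a + b" arbitrary: a b rule: less_induct)
  case less
  show ?case
  proof (cases "b = 0")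
    case True
    then show ?thesis using E0[of "a+1" 0] Esym_bound[of a 1] by simp
  next
    case b0: False
    show ?thesis
    proof (cases "a = b")
      case True
      then show ?thesis using Esym_bound by simp
    next
      case False
      hence ab: "b < a" using less by simp
      have i1: "E (a-1) (b+1) \<le> E a b" using less(1)[of "a-1" b] ab b0 by simp
      have i2: "E a b \<le> E (a+1) (b-1)" using less(1)[of a "b-1"] ab b0 by simp
      have r1: "E a (b+1) = (E (a-1) (b+1) + E a b) / 2" using Erec[of a "b+1"] ab by simp
      have r2: "E (a+1) b = (E a b + E (a+1) (b-1)) / 2" using Erec[of "a+1" b] b0 by simp
      show ?thesis using i1 i2 r1 r2 by simp
    qed
  qed
qed

lemma mono_gap: "m2 \<le> m1 \<Longrightarrow> m1 + m2 = N \<Longrightarrow> E (N - N div 2) (N div 2) \<le> E m1 m2"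
proof (induction "m1 - m2" arbitrary: m1 m2 rule: less_induct)
  case less
  show ?case
  proof (cases "m1 \<le> m2 + 1")
    case True
    hence "m1 = N - N div 2" "m2 = N div 2" using less.prems by auto
    then show ?thesis by simp
  next
    case False
    have "E (N - N div 2) (N div 2) \<le> E (m1 - 1) (m2 + 1)"
      using less(1)[of "m1 - 1" "m2 + 1"] False less.prems by simp
    also have "\<dots> \<le> E (m1 - 1 + 1) m2" using Dpos[of m2 "m1 - 1"] False by simp
    finally show ?thesis using False by simp
  qed
qed

theorem theorem1:
  fixes N :: nat
  shows "\<exists>n1 n2. n1 + n2 = N
           \<and> (\<forall>m1 m2. m1 + m2 = N \<longrightarrow> expected_unhappy [n1, n2] \<le> expected_unhappy [m1, m2])
           \<and> \<bar>int n1 - int n2\<bar> \<le> 1"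
proof (intro exI conjI allI impI)
  show "N - N div 2 + N div 2 = N" by simp
  show "\<bar>int (N - N div 2) - int (N div 2)\<bar> \<le> 1" by linarith
  fix m1 m2 assume h: "m1 + m2 = N"
  show "expected_unhappy [N - N div 2, N div 2] \<le> expected_unhappy [m1, m2]"
  proof (cases "m2 \<le> m1")
    case True then show ?thesis using mono_gap[OF True h] unfolding E_def by simp
  next
    case False
    have "E (N - N div 2) (N div 2) \<le> E m2 m1" using mono_gap[of m1 m2 N] False h by simp
    then show ?thesis using Esym_bound[of m2 m1] unfolding E_def by simp
  qed
qed

end
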